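(* Let $\kappa>\omega$ be a cardinal, $S_\kappa$ the group of all permutations of $\kappa$, and $\mathcal{E}$ the coarse structure on $\kappa$ with base $\{E_H: H\subseteq S_\kappa \text{ finite}, \ \mathrm{id}\in H\}$, $E_H=\{(x,y):y\in Hx\}$. Let $\mathcal{F}$ be the discrete coarse structure on $\kappa$ defined by the bornology $[\kappa]^{<\kappa}$ and $\mathcal{E}'=\mathcal{F}\vee\mathcal{E}$. Then: the bounded sets of $(\kappa,\mathcal{E})$ are exactly the finite subsets; $(\kappa,\mathcal{E})$ is ultranormal but not extremely normal; $\mathcal{E}\subsetneq\mathcal{E}'$; and $(\kappa,\mathcal{E}')$ is extremely normal but not maximal.
   Context: A ballean $(X,\mathcal{E})$ is a set with a coarse structure. $E[x]=\{y:(x,y)\in E\}$, $E[A]=\bigcup_{a\in A}E[a]$. $Y$ is bounded if $Y\subseteq E[x]$ for some $x$ and $E\in\mathcal{E}$. $A$ is large if $X=E[A]$ for some $E$. Subsets $A,B$ are asymptotically disjoint if $E[A]\cap E[B]$ is bounded for every $E$. An unbounded ballean is ultranormal if no two unbounded subsets are asymptotically disjoint; extremely normal if every unbounded subset is large; maximal if $X$ is bounded in every coarse structure strictly containing $\mathcal{E}$. For a bornology $\mathcal{B}$ on $X$, the discrete coarse structure defined by $\mathcal{B}$ has base $\{E_B:B\in\mathcal{B}\}$ where $E_B[x]=B$ for $x\in B$ and $E_B[x]=\{x\}$ for $x\notin B$. $[\kappa]^{<\kappa}$ is the family of subsets of $\kappa$ of cardinality $<\kappa$. For coarse structures $\mathcal{E}_1,\mathcal{E}_2$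 on $X$, $\mathcal{E}_1\vee\mathcal{E}_2$ is the smallest coarse structure containing both. *)

theory Defs
  imports Main "HOL-Library.Countable_Set"
begin

definition entourage :: "'a set \<Rightarrow> ('a \<times> 'a) set \<Rightarrow> bool" where
  "entourage X eps \<longleftrightarrow> Id_on X \<subseteq> eps \<and> eps \<subseteq> X \<times> X"

definition coarse_structure :: "'a set \<Rightarrow> ('a \<times> 'a) set set \<Rightarrow> bool" where
  "coarse_structure X CE \<longleftrightarrow>
     Id_on X \<in> CE \<and> (\<forall>e\<in>CE. entourage X e) \<and>
     (\<forall>e\<in>CE. \<forall>d\<in>CE. e O d \<in> CE) \<and>
     (\<forall>e\<in>CE. e\<inverse> \<in> CE) \<and>
     (\<forall>e\<in>CE. \<forall>d. entourage X d \<and> d \<subseteq> e \<longrightarrow> d \<in> CE)"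

definition bounded_in :: "'a set \<Rightarrow> ('a \<times> 'a) set set \<Rightarrow> 'a set \<Rightarrow> bool" where
  "bounded_in X CE Y \<longleftrightarrow> (\<exists>x\<in>X. \<exists>e\<in>CE. Y \<subseteq> e `` {x})"

definition large_in :: "'a set \<Rightarrow> ('a \<times> 'a) set set \<Rightarrow> 'a set \<Rightarrow> bool" where
  "large_in X CE A \<longleftrightarrow> (\<exists>e\<in>CE. X = e `` A)"

definition asymp_disjoint :: "'a set \<Rightarrow> ('a \<times> 'a) set set \<Rightarrow> 'a set \<Rightarrow> 'a set \<Rightarrow> bool" where
  "asymp_disjoint X CE A B \<longleftrightarrow> (\<forall>e\<in>CE. bounded_in X CE (e `` A \<inter> e `` B))"

definition unbounded_ballean :: "'a set \<Rightarrow> ('a \<times> 'a) set set \<Rightarrow> bool" where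
  "unbounded_ballean X CE \<longleftrightarrow> \<not> bounded_in X CE X"

definition ultranormal :: "'a set \<Rightarrow> ('a \<times> 'a) set set \<Rightarrow> bool" where
  "ultranormal X CE \<longleftrightarrow> unbounded_ballean X CE \<and>
     (\<forall>A B. A \<subseteq> X \<and> B \<subseteq> X \<and> \<not> bounded_in X CE A \<and> \<not> bounded_in X CE B
        \<longrightarrow> \<not> asymp_disjoint X CE A B)"

definition extremely_normal :: "'a set \<Rightarrow> ('a \<times> 'a) set set \<Rightarrow> bool" where
  "extremely_normal X CE \<longleftrightarrow> unbounded_ballean X CE \<and>
     (\<forall>A. A \<subseteq> X \<and> \<not> bounded_in X CE A \<longrightarrow> large_in X CE A)"

definition maximal_ballean :: "'a set \<Rightarrow> ('a \<times> 'a) set set \<Rightarrow> bool" where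
  "maximal_ballean X CE \<longleftrightarrow> unbounded_ballean X CE \<and>
     (\<forall>CE'. coarse_structure X CE' \<and> CE \<subset> CE' \<longrightarrow> bounded_in X CE' X)"

definition E_bor :: "'a set \<Rightarrow> 'a set \<Rightarrow> ('a \<times> 'a) set" where
  "E_bor X B = (B \<times> B) \<union> Id_on X"

definition discrete_coarse :: "'a set \<Rightarrow> 'a set set \<Rightarrow> ('a \<times> 'a) set set" where
  "discrete_coarse X Bor = {e. entourage X e \<and> (\<exists>B\<in>Bor. e \<subseteq> E_bor X B)}"

definition coarse_join :: "'a set \<Rightarrow> ('a \<times> 'a) set set \<Rightarrow> ('a \<times> 'a) set set \<Rightarrow> ('a \<times> 'a) set set" where
  "coarse_join X CE1 CE2 = \<Inter> {C. coarse_structure X C \<and> CE1 \<subseteq> C \<and> CE2 \<subseteq> C}"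

(* The permutation coarse structure on a type (kappa = |UNIV|):
   base {E_H : H finite set of permutations, id \<in> H}, E_H = {(x,y). y \<in> H x} *)
definition E_perm :: "('a \<Rightarrow> 'a) set \<Rightarrow> ('a \<times> 'a) set" where
  "E_perm H = {(x, y). \<exists>h\<in>H. y = h x}"

definition perm_coarse :: "('a \<times> 'a) set set" where
  "perm_coarse = {e. entourage UNIV e \<and>
     (\<exists>H. finite H \<and> id \<in> H \<and> (\<forall>h\<in>H. bij h) \<and> e \<subseteq> E_perm H)}"

definition small_sets :: "'a set set" where
  "small_sets = {A. (card_of A, card_of (UNIV :: 'a set)) \<in> ordLess}"

end

theory Submission
  imports Defs
begin
unbundle cardinal_syntax


lemma unc_nat_less:
  assumes "uncountable (UNIV :: 'a set)"
  shows "|UNIV :: nat set| <o |UNIV :: 'a set|"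
proof -
  have "\<not> |UNIV :: 'a set| \<le>o |UNIV :: nat set|"
  proof
    assume "|UNIV :: 'a set| \<le>o |UNIV :: nat set|"
    then obtain f :: "'a \<Rightarrow> nat" where "inj_on f UNIV" using card_of_ordLeq[of "UNIV :: 'a set" "UNIV :: nat set"] by auto
    then have "countable (UNIV :: 'a set)" by (rule countableI')
    with assms show False by simp
  qed
  then show ?thesis using ordLess_or_ordLeq[OF card_of_Well_order card_of_Well_order, of "UNIV :: nat set" "UNIV :: 'a set"] by auto
qed

lemma countable_small:
  assumes "uncountable (UNIV :: 'a set)" "countable (A :: 'a set)"
  shows "A \<in> small_sets"
proof -
  obtain f :: "'a \<Rightarrow> nat" where "inj_on f A" using assms(2) countable_def by blast
  then have "|A| \<le>o |UNIV :: nat set|" using card_of_ordLeq[of A "UNIV :: nat set"] by auto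
  from ordLeq_ordLess_trans[OF this unc_nat_less[OF assms(1)]] show ?thesis unfolding small_sets_def by simp
qed

lemma small_mono: "A \<subseteq> B \<Longrightarrow> B \<in> small_sets \<Longrightarrow> A \<in> small_sets"
  unfolding small_sets_def by (metis card_of_mono1 ordLeq_ordLess_trans mem_Collect_eq)

lemma small_Un:
  assumes "uncountable (UNIV :: 'a set)" "(A :: 'a set) \<in> small_sets" "B \<in> small_sets"
  shows "A \<union> B \<in> small_sets"
proof -
  have "\<not> finite (UNIV :: 'a set)" using assms(1) countable_finite by blast
  then show ?thesis using assms(2,3) card_of_Un_ordLess_infinite[of "UNIV :: 'a set" A B]
    unfolding small_sets_def by simp
qed

lemma UNIV_not_small: "(UNIV :: 'a set) \<notin> small_sets"
  unfolding small_sets_def by (simp add: ordLess_irreflexive)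

lemma small_times_nat:
  assumes "uncountable (UNIV :: 'a set)" "(S :: 'a set) \<in> small_sets"
  shows "|S \<times> (UNIV :: nat set)| <o |UNIV :: 'a set|"
proof (cases "finite S")
  case True
  then have "countable (S \<times> (UNIV :: nat set))" by (intro countable_SIGMA) (auto intro: countable_finite)
  then obtain f :: "'a \<times> nat \<Rightarrow> nat" where "inj_on f (S \<times> UNIV)" using countable_def by blast
  then have "|S \<times> (UNIV :: nat set)| \<le>o |UNIV :: nat set|" using card_of_ordLeq[of "S \<times> (UNIV :: nat set)" "UNIV :: nat set"] by auto
  from ordLeq_ordLess_trans[OF this unc_nat_less[OF assms(1)]] show ?thesis .
next
  case False
  then have "|UNIV :: nat set| \<le>o |S|" using infinite_iff_card_of_nat by auto
  then have "|S \<times> (UNIV :: nat set)| =o |S|" using card_of_Times_infinite[OF False, of "UNIV :: nat set"] by auto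
  moreover have "|S| <o |UNIV :: 'a set|" using assms(2) unfolding small_sets_def by simp
  ultimately show ?thesis by (rule ordIso_ordLess_trans)
qed

lemma small_UN_countable:
  assumes "uncountable (UNIV :: 'a set)" "(S :: 'a set) \<in> small_sets" "\<And>s. s \<in> S \<Longrightarrow> countable (C s :: 'a set)"
  shows "(\<Union>s\<in>S. C s) \<in> small_sets"
proof -
  define sel where "sel x = (SOME s. s \<in> S \<and> x \<in> C s)" for x
  have sel: "sel x \<in> S \<and> x \<in> C (sel x)" if "x \<in> (\<Union>s\<in>S. C s)" for x
    using that unfolding sel_def by (metis (mono_tags, lifting) UN_E someI_ex)
  define g where "g x = (sel x, to_nat_on (C (sel x)) x)" for x
  have "inj_on g (\<Union>s\<in>S. C s)"
  proof (rule inj_onI)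
    fix x y assume x: "x \<in> (\<Union>s\<in>S. C s)" and y: "y \<in> (\<Union>s\<in>S. C s)" and "g x = g y"
    then have e: "sel x = sel y" "to_nat_on (C (sel x)) x = to_nat_on (C (sel x)) y" unfolding g_def by auto
    have "inj_on (to_nat_on (C (sel x))) (C (sel x))" using sel[OF x] assms(3) inj_on_to_nat_on by blast
    then show "x = y" using e sel[OF x] sel[OF y] by (metis inj_on_def)
  qed
  moreover have "g ` (\<Union>s\<in>S. C s) \<subseteq> S \<times> UNIV" using sel unfolding g_def by auto
  ultimately have "|\<Union>s\<in>S. C s| \<le>o |S \<times> (UNIV :: nat set)|" using card_of_ordLeq[of "\<Union>s\<in>S. C s" "S \<times> (UNIV :: nat set)"] by auto
  from ordLeq_ordLess_trans[OF this small_times_nat[OF assms(1,2)]] show ?thesis unfolding small_sets_def by simp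
qed

lemma not_small_inj:
  assumes "(A :: 'a set) \<notin> small_sets"
  shows "\<exists>f. inj_on f (- A) \<and> f ` (- A) \<subseteq> A"
proof -
  have "|UNIV :: 'a set| \<le>o |A|" using assms ordLess_or_ordLeq[OF card_of_Well_order card_of_Well_order, of A "UNIV :: 'a set"]
    unfolding small_sets_def by auto
  have "|- A| \<le>o |UNIV :: 'a set|" by (rule card_of_mono1) simp
  then have "|- A| \<le>o |A|" using \<open>|UNIV :: 'a set| \<le>o |A|\<close> by (rule ordLeq_transitive)
  then show ?thesis using card_of_ordLeq[of "- A" A] by auto
qed

lemma swap_exists:
  assumes "inj_on f P" "f ` P \<inter> P = {}"
  shows "\<exists>h. bij h \<and> (\<forall>x\<in>P. h x = f x) \<and> (\<forall>x\<in>P. h (f x) = x)"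
proof -
  define h where "h x = (if x \<in> P then f x else if x \<in> f ` P then the_inv_into P f x else x)" for x
  have hf: "h (f x) = x" if "x \<in> P" for x
  proof -
    have "f x \<notin> P" using assms(2) that by blast
    then show ?thesis unfolding h_def using that the_inv_into_f_f[OF assms(1)] by auto
  qed
  have "h (h x) = x" for x
  proof -
    consider "x \<in> P" | "x \<notin> P" "x \<in> f ` P" | "x \<notin> P" "x \<notin> f ` P" by blast
    then show ?thesis
    proof cases
      case 1
      then have "h x = f x" by (simp add: h_def)
      then show ?thesis using hf[OF 1] by simp
    next
      case 2
      then obtain y where y: "y \<in> P" "x = f y" by blast
      then show ?thesis using hf by (simp add: h_def)
    next
      case 3 then show ?thesis unfolding h_def by simp
    qed
  qed
  then have "bij h" by (rule involuntory_imp_bij)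
  then show ?thesis using hf by (auto simp: h_def)
qed


definition Dstr :: "(('a \<times> 'a) set \<Rightarrow> bool) \<Rightarrow> ('a \<times> 'a) set set" where
  "Dstr P = {e. entourage UNIV e \<and> (\<exists>S g. S \<in> small_sets \<and> P g \<and> e \<subseteq> S \<times> S \<union> g)}"

lemma Dstr_coarse:
  assumes unc: "uncountable (UNIV :: 'a set)"
    and PId: "P (Id :: ('a \<times> 'a) set)"
    and PO: "\<And>g g'. P g \<Longrightarrow> P g' \<Longrightarrow> P (g O g')"
    and Pc: "\<And>g. P g \<Longrightarrow> P (g\<inverse>)"
    and Pcnt: "\<And>g x. P g \<Longrightarrow> countable (g `` {x})"
  shows "coarse_structure (UNIV :: 'a set) (Dstr P)"
  unfolding coarse_structure_def
proof (intro conjI ballI allI impI)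
  have "({} :: 'a set) \<in> small_sets" using countable_small[OF unc] by simp
  then show "Id_on UNIV \<in> Dstr P" unfolding Dstr_def entourage_def using PId by auto
next
  fix e assume "e \<in> Dstr P" then show "entourage UNIV e" unfolding Dstr_def by simp
next
  fix e d assume e: "e \<in> Dstr P" and d: "d \<in> Dstr P"
  from e obtain S g where S: "S \<in> small_sets" "P g" "e \<subseteq> S \<times> S \<union> g" and ee: "entourage UNIV e"
    unfolding Dstr_def by auto
  from d obtain T g' where T: "T \<in> small_sets" "P g'" "d \<subseteq> T \<times> T \<union> g'" and de: "entourage UNIV d"
    unfolding Dstr_def by auto
  define U where "U = S \<union> T \<union> (\<Union>s\<in>S. g' `` {s}) \<union> (\<Union>t\<in>T. g\<inverse> `` {t})"
  have U1: "(\<Union>s\<in>S. g' `` {s}) \<in> small_sets"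
    by (rule small_UN_countable[OF unc S(1)]) (rule Pcnt[OF T(2)])
  have U2: "(\<Union>t\<in>T. g\<inverse> `` {t}) \<in> small_sets"
    by (rule small_UN_countable[OF unc T(1)]) (rule Pcnt[OF Pc[OF S(2)]])
  have U: "U \<in> small_sets" unfolding U_def
    by (intro small_Un[OF unc] S(1) T(1) U1 U2)
  have "e O d \<subseteq> U \<times> U \<union> (g O g')"
  proof
    fix p assume "p \<in> e O d"
    then obtain x y z where p: "p = (x, z)" "(x, y) \<in> e" "(y, z) \<in> d" by blast
    then have "(x, y) \<in> S \<times> S \<union> g" "(y, z) \<in> T \<times> T \<union> g'" using S T by auto
    then show "p \<in> U \<times> U \<union> (g O g')" unfolding U_def p by blast
  qed
  moreover have "entourage UNIV (e O d)" using ee de unfolding entourage_def by auto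
  ultimately show "e O d \<in> Dstr P" unfolding Dstr_def using U PO[OF S(2) T(2)] by blast
next
  fix e assume e: "e \<in> Dstr P"
  from e obtain S g where S: "S \<in> small_sets" "P g" "e \<subseteq> S \<times> S \<union> g" and ee: "entourage UNIV e"
    unfolding Dstr_def by auto
  have "e\<inverse> \<subseteq> S \<times> S \<union> g\<inverse>" using S by auto
  moreover have "entourage UNIV (e\<inverse>)" using ee unfolding entourage_def by auto
  ultimately show "e\<inverse> \<in> Dstr P" unfolding Dstr_def using S Pc by blast
next
  fix e d assume e: "e \<in> Dstr P" and "entourage UNIV d \<and> d \<subseteq> e"
  then show "d \<in> Dstr P" unfolding Dstr_def by blast
qed

definition P1 :: "('a \<times> 'a) set \<Rightarrow> bool" where
  "P1 g \<longleftrightarrow> (\<exists>H. finite H \<and> (\<forall>h\<in>H. bij h) \<and> g \<subseteq> E_perm H)"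

definition P2 :: "('a \<times> 'a) set \<Rightarrow> bool" where
  "P2 g \<longleftrightarrow> (\<forall>x. countable (g `` {x}) \<and> countable (g\<inverse> `` {x}))"

lemma E_perm_fiber: "E_perm H `` {x} = (\<lambda>h. h x) ` H"
  unfolding E_perm_def by auto

lemma P1_Id: "P1 Id"
  unfolding P1_def E_perm_def by (rule exI[of _ "{id}"]) auto

lemma P1_O: assumes "P1 g" "P1 g'" shows "P1 (g O g')"
proof -
  obtain H where H: "finite H" "\<forall>h\<in>H. bij h" "g \<subseteq> E_perm H" using assms(1) unfolding P1_def by blast
  obtain H' where H': "finite H'" "\<forall>h\<in>H'. bij h" "g' \<subseteq> E_perm H'" using assms(2) unfolding P1_def by blast
  let ?K = "(\<lambda>(h, h'). h' \<circ> h) ` (H \<times> H')"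
  have "finite ?K" using H H' by simp
  moreover have "\<forall>k\<in>?K. bij k" using H H' by (auto intro: bij_comp)
  moreover have "g O g' \<subseteq> E_perm ?K"
  proof
    fix p assume "p \<in> g O g'"
    then obtain x y z where p: "p = (x, z)" "(x, y) \<in> g" "(y, z) \<in> g'" by blast
    from p(2) H(3) have "(x, y) \<in> E_perm H" by blast
    then obtain h where h: "h \<in> H" "y = h x" unfolding E_perm_def by blast
    from p(3) H'(3) have "(y, z) \<in> E_perm H'" by blast
    then obtain h' where h': "h' \<in> H'" "z = h' y" unfolding E_perm_def by blast
    have "h' \<circ> h \<in> ?K" using h h' by force
    moreover have "z = (h' \<circ> h) x" using h h' by simp
    ultimately show "p \<in> E_perm ?K" unfolding p E_perm_def by blast
  qed
  ultimately show ?thesis unfolding P1_def by blast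
qed

lemma P1_conv: assumes "P1 g" shows "P1 (g\<inverse>)"
proof -
  obtain H where H: "finite H" "\<forall>h\<in>H. bij h" "g \<subseteq> E_perm H" using assms(1) unfolding P1_def by blast
  have "finite (inv ` H)" using H by simp
  moreover have "\<forall>k\<in>inv ` H. bij k" using H by (auto intro: bij_imp_bij_inv)
  moreover have "g\<inverse> \<subseteq> E_perm (inv ` H)"
  proof
    fix p assume "p \<in> g\<inverse>"
    then obtain x y where p: "p = (y, x)" "(x, y) \<in> g" by blast
    then obtain h where "h \<in> H" "y = h x" using H unfolding E_perm_def by blast
    then have "x = inv h y" using H by (simp add: bij_def inv_f_f)
    then show "p \<in> E_perm (inv ` H)" unfolding p E_perm_def using \<open>h \<in> H\<close> by blast
  qed
  ultimately show ?thesis unfolding P1_def by blast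
qed

lemma P1_finite: assumes "P1 g" shows "finite (g `` {x})"
proof -
  obtain H where H: "finite H" "g \<subseteq> E_perm H" using assms unfolding P1_def by blast
  from H(2) have "g `` {x} \<subseteq> E_perm H `` {x}" by (rule Image_mono) simp
  then have "g `` {x} \<subseteq> (\<lambda>h. h x) ` H" by (simp only: E_perm_fiber)
  then show ?thesis using H finite_subset by blast
qed

lemma P1_P2: assumes "P1 g" shows "P2 g"
  unfolding P2_def using P1_finite[OF assms] P1_finite[OF P1_conv[OF assms]] by (simp add: countable_finite)

lemma P2_Id: "P2 Id" unfolding P2_def by simp

lemma P2_O: assumes "P2 g" "P2 g'" shows "P2 (g O g')"
proof -
  have "(g O g') `` {x} = (\<Union>y\<in>g `` {x}. g' `` {y})" for x by auto
  moreover have "(g O g')\<inverse> `` {x} = (\<Union>y\<in>g'\<inverse> `` {x}. g\<inverse> `` {y})" for x by auto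
  ultimately show ?thesis using assms unfolding P2_def by (simp add: countable_UN)
qed

lemma P2_conv: "P2 g \<Longrightarrow> P2 (g\<inverse>)" unfolding P2_def by simp

lemma D1_coarse: "uncountable (UNIV :: 'a set) \<Longrightarrow> coarse_structure (UNIV :: 'a set) (Dstr P1)"
  apply (rule Dstr_coarse)
      apply assumption
     apply (rule P1_Id)
    apply (erule (1) P1_O)
   apply (erule P1_conv)
  apply (rule countable_finite, erule P1_finite)
  done

lemma D2_coarse: "uncountable (UNIV :: 'a set) \<Longrightarrow> coarse_structure (UNIV :: 'a set) (Dstr P2)"
  apply (rule Dstr_coarse)
      apply assumption
     apply (rule P2_Id)
    apply (erule (1) P2_O)
   apply (erule P2_conv)
  apply (simp add: P2_def)
  done

lemma D1_D2: "Dstr P1 \<subseteq> Dstr P2"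
proof
  fix e :: "('a \<times> 'a) set" assume "e \<in> Dstr P1"
  then obtain S g where "entourage UNIV e" "S \<in> small_sets" "P1 g" "e \<subseteq> S \<times> S \<union> g"
    unfolding Dstr_def by blast
  then show "e \<in> Dstr P2" unfolding Dstr_def using P1_P2 by blast
qed

lemma F_D1:
  assumes "uncountable (UNIV :: 'a set)"
  shows "discrete_coarse (UNIV :: 'a set) small_sets \<subseteq> Dstr P1"
proof
  fix e :: "('a \<times> 'a) set" assume "e \<in> discrete_coarse UNIV small_sets"
  then obtain B where B: "entourage UNIV e" "B \<in> small_sets" "e \<subseteq> E_bor UNIV B"
    unfolding discrete_coarse_def by blast
  have "e \<subseteq> B \<times> B \<union> Id" using B(3) unfolding E_bor_def by auto
  then show "e \<in> Dstr P1" unfolding Dstr_def using B(1,2) P1_Id by blast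
qed

lemma perm_D1:
  assumes "uncountable (UNIV :: 'a set)"
  shows "(perm_coarse :: ('a \<times> 'a) set set) \<subseteq> Dstr P1"
proof
  fix e :: "('a \<times> 'a) set" assume "e \<in> perm_coarse"
  then obtain H where H: "entourage UNIV e" "finite H" "\<forall>h\<in>H. bij h" "e \<subseteq> E_perm H"
    unfolding perm_coarse_def by blast
  have "({} :: 'a set) \<in> small_sets" using countable_small[OF assms] by simp
  moreover have "P1 (E_perm H)" unfolding P1_def using H by blast
  moreover have "e \<subseteq> {} \<times> {} \<union> E_perm H" using H by simp
  ultimately show "e \<in> Dstr P1" unfolding Dstr_def using H(1) by blast
qed

lemma join_sub:
  assumes "coarse_structure X C" "CE1 \<subseteq> C" "CE2 \<subseteq> C"
  shows "coarse_join X CE1 CE2 \<subseteq> C"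
  unfolding coarse_join_def using assms by blast

lemma join_sup1: "CE1 \<subseteq> coarse_join X CE1 CE2"
  unfolding coarse_join_def by blast

lemma join_sup2: "CE2 \<subseteq> coarse_join X CE1 CE2"
  unfolding coarse_join_def by blast


definition tr :: "'a \<Rightarrow> 'a \<Rightarrow> 'a \<Rightarrow> 'a" where
  "tr a b z = (if z = a then b else if z = b then a else z)"

lemma tr_bij: "bij (tr a b)"
  by (rule involuntory_imp_bij) (simp add: tr_def)

lemma E_perm_in:
  assumes "finite H" "id \<in> H" "\<forall>h\<in>H. bij h"
  shows "E_perm H \<in> perm_coarse"
proof -
  have "Id_on UNIV \<subseteq> E_perm H"
  proof
    fix p assume "p \<in> Id_on (UNIV :: 'a set)"
    then obtain z where z: "p = (z, z)" by (auto simp: Id_on_def)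
    have "z = id z" by simp
    then show "p \<in> E_perm H" unfolding z E_perm_def using assms(2) by blast
  qed
  then have "entourage UNIV (E_perm H)" unfolding entourage_def by simp
  then show ?thesis unfolding perm_coarse_def using assms by blast
qed

lemma perm_fiber_finite:
  assumes "e \<in> perm_coarse"
  shows "finite (e `` {x})"
proof -
  obtain H where H: "finite H" "e \<subseteq> E_perm H" using assms unfolding perm_coarse_def by blast
  from H(2) have "e `` {x} \<subseteq> E_perm H `` {x}" by (rule Image_mono) simp
  then have "e `` {x} \<subseteq> (\<lambda>h. h x) ` H" by (simp only: E_perm_fiber)
  then show ?thesis by (rule finite_subset) (simp add: H(1))
qed

lemma bounded_perm: "bounded_in UNIV perm_coarse Y \<longleftrightarrow> finite Y"
proof
  assume "bounded_in UNIV perm_coarse Y"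
  then obtain x e where xe: "e \<in> perm_coarse" "Y \<subseteq> e `` {x}" unfolding bounded_in_def by blast
  from xe(2) show "finite Y" by (rule finite_subset) (rule perm_fiber_finite[OF xe(1)])
next
  assume fin: "finite Y"
  define x :: 'a where "x = undefined"
  define H where "H = insert id ((\<lambda>y. tr x y) ` Y)"
  have "finite H" "id \<in> H" "\<forall>h\<in>H. bij h" unfolding H_def using fin tr_bij by auto
  then have e: "E_perm H \<in> perm_coarse" by (rule E_perm_in)
  have "Y \<subseteq> E_perm H `` {x}"
  proof
    fix y assume "y \<in> Y"
    then have "tr x y \<in> H" unfolding H_def by blast
    moreover have "y = tr x y x" unfolding tr_def by simp
    ultimately show "y \<in> E_perm H `` {x}" unfolding E_perm_def by blast
  qed
  then show "bounded_in UNIV perm_coarse Y" unfolding bounded_in_def using e by blast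
qed

lemma unc_infinite: "uncountable (UNIV :: 'a set) \<Longrightarrow> infinite (UNIV :: 'a set)"
  using countable_finite by blast

lemma ultranormal_perm:
  assumes unc: "uncountable (UNIV :: 'a set)"
  shows "ultranormal (UNIV :: 'a set) perm_coarse"
  unfolding ultranormal_def
proof (intro conjI allI impI)
  show "unbounded_ballean (UNIV :: 'a set) perm_coarse"
    unfolding unbounded_ballean_def bounded_perm using unc_infinite[OF unc] by simp
next
  fix A B :: "'a set"
  assume "A \<subseteq> UNIV \<and> B \<subseteq> UNIV \<and> \<not> bounded_in UNIV perm_coarse A \<and> \<not> bounded_in UNIV perm_coarse B"
  then have infA: "infinite A" and infB: "infinite B" unfolding bounded_perm by auto
  have "\<exists>e\<in>perm_coarse. infinite (e `` A \<inter> e `` B)"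
  proof (cases "finite (A \<inter> B)")
    case False
    have "E_perm {id} \<in> perm_coarse" by (rule E_perm_in) auto
    moreover have "E_perm {id} `` A \<inter> E_perm {id} `` B = A \<inter> B" unfolding E_perm_def by auto
    ultimately show ?thesis using False by (intro bexI[of _ "E_perm {id}"]) simp_all
  next
    case True
    have "A - B = A - (A \<inter> B)" by blast
    then have "infinite (A - B)" using True infA by simp
    then obtain a :: "nat \<Rightarrow> 'a" where a: "inj a" "range a \<subseteq> A - B"
      using infinite_countable_subset by blast
    obtain b :: "nat \<Rightarrow> 'a" where b: "inj b" "range b \<subseteq> B"
      using infinite_countable_subset[OF infB] by blast
    define f where "f = b \<circ> inv a"
    have fa: "f (a i) = b i" for i unfolding f_def using a(1) by (simp add: inv_f_f)
    have "inj_on f (range a)"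
    proof (rule inj_onI)
      fix x y assume "x \<in> range a" "y \<in> range a" "f x = f y"
      then obtain i j where "x = a i" "y = a j" "b i = b j" using fa by auto
      then show "x = y" using b(1) by (simp add: inj_eq)
    qed
    moreover have "f ` range a = range b" using fa by (auto simp: image_iff)
    moreover have "range b \<inter> range a = {}" using a(2) b(2) by blast
    ultimately obtain h where h: "bij h" "\<forall>x\<in>range a. h x = f x"
      using swap_exists[of f "range a"] by auto
    have e: "E_perm {id, h} \<in> perm_coarse" by (rule E_perm_in) (use h in auto)
    have sub: "range b \<subseteq> E_perm {id, h} `` A \<inter> E_perm {id, h} `` B"
    proof
      fix z assume "z \<in> range b"
      then obtain i where i: "z = b i" by blast
      have "a i \<in> A" using a(2) by blast
      moreover have "z = h (a i)" using h(2) fa i by simp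
      ultimately have zA: "z \<in> E_perm {id, h} `` A" unfolding E_perm_def by blast
      have "z \<in> B" using b(2) i by blast
      moreover have "z = id z" by simp
      ultimately have "z \<in> E_perm {id, h} `` B" unfolding E_perm_def by blast
      with zA show "z \<in> E_perm {id, h} `` A \<inter> E_perm {id, h} `` B" by blast
    qed
    have "infinite (range b)" using b(1) by (simp add: range_inj_infinite)
    then have "infinite (E_perm {id, h} `` A \<inter> E_perm {id, h} `` B)"
      using finite_subset[OF sub] by blast
    with e show ?thesis by (intro bexI[of _ "E_perm {id, h}"])
  qed
  then obtain e where "e \<in> perm_coarse" "infinite (e `` A \<inter> e `` B)" by blast
  then show "\<not> asymp_disjoint UNIV perm_coarse A B"
    unfolding asymp_disjoint_def bounded_perm by auto
qed

lemma not_extremely_normal_perm: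
  assumes unc: "uncountable (UNIV :: 'a set)"
  shows "\<not> extremely_normal (UNIV :: 'a set) perm_coarse"
proof
  assume en: "extremely_normal (UNIV :: 'a set) perm_coarse"
  obtain a :: "nat \<Rightarrow> 'a" where a: "inj a"
    using infinite_countable_subset[OF unc_infinite[OF unc]] by blast
  have "infinite (range a)" using a by (simp add: range_inj_infinite)
  then have "\<not> bounded_in UNIV perm_coarse (range a)" unfolding bounded_perm by simp
  then have "large_in UNIV perm_coarse (range a)" using en unfolding extremely_normal_def by blast
  then obtain e where e: "e \<in> perm_coarse" "UNIV = e `` range a" unfolding large_in_def by blast
  obtain H where H: "finite H" "e \<subseteq> E_perm H" using e(1) unfolding perm_coarse_def by blast
  have "e `` range a \<subseteq> (\<Union>h\<in>H. h ` range a)"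
  proof
    fix z assume "z \<in> e `` range a"
    then obtain y where "y \<in> range a" "(y, z) \<in> e" by blast
    then have "(y, z) \<in> E_perm H" "y \<in> range a" using H(2) by blast+
    then show "z \<in> (\<Union>h\<in>H. h ` range a)" unfolding E_perm_def by blast
  qed
  moreover have "countable (\<Union>h\<in>H. h ` range a)" using H(1) by (simp add: countable_finite)
  ultimately have "countable (e `` range a)" by (rule countable_subset)
  then have "countable (UNIV :: 'a set)" by (subst e(2))
  then show False using unc by simp
qed


abbreviation EJ :: "('a \<times> 'a) set set" where
  "EJ \<equiv> coarse_join UNIV (discrete_coarse UNIV small_sets) perm_coarse"

lemma bounded_mono:
  assumes "CE \<subseteq> CE'" "bounded_in X CE Y" shows "bounded_in X CE' Y"
  using assms unfolding bounded_in_def by blast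

lemma EJ_D1: assumes "uncountable (UNIV :: 'a set)" shows "(EJ :: ('a \<times> 'a) set set) \<subseteq> Dstr P1"
  by (rule join_sub[OF D1_coarse[OF assms] F_D1[OF assms] perm_D1[OF assms]])

lemma D2_unbounded:
  assumes unc: "uncountable (UNIV :: 'a set)"
  shows "\<not> bounded_in (UNIV :: 'a set) (Dstr P2) UNIV"
proof
  assume "bounded_in (UNIV :: 'a set) (Dstr P2) UNIV"
  then obtain x :: 'a and e :: "('a \<times> 'a) set" where xe: "e \<in> Dstr P2" "UNIV \<subseteq> e `` {x}" unfolding bounded_in_def by blast
  then obtain S g where S: "S \<in> small_sets" "P2 g" "e \<subseteq> S \<times> S \<union> g" unfolding Dstr_def by blast
  have "e `` {x} \<subseteq> S \<union> g `` {x}" using S(3) by blast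
  then have sub: "UNIV \<subseteq> S \<union> g `` {x}" using xe(2) by blast
  have "g `` {x} \<in> small_sets" using countable_small[OF unc] S(2) unfolding P2_def by blast
  then have "S \<union> g `` {x} \<in> small_sets" using small_Un[OF unc S(1)] by blast
  then have "(UNIV :: 'a set) \<in> small_sets" using small_mono[OF sub] by blast
  then show False using UNIV_not_small by blast
qed

lemma small_bounded_EJ:
  assumes unc: "uncountable (UNIV :: 'a set)" and A: "(A :: 'a set) \<in> small_sets"
  shows "bounded_in UNIV EJ A"
proof -
  define x :: 'a where "x = undefined"
  have B: "insert x A \<in> small_sets"
    using small_Un[OF unc countable_small[OF unc, of "{x}"] A] by simp
  have "entourage UNIV (E_bor UNIV (insert x A))" unfolding entourage_def E_bor_def by auto
  then have "E_bor UNIV (insert x A) \<in> discrete_coarse UNIV small_sets"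
    unfolding discrete_coarse_def using B by blast
  then have e: "E_bor UNIV (insert x A) \<in> EJ" using join_sup1 by blast
  have "A \<subseteq> E_bor UNIV (insert x A) `` {x}" unfolding E_bor_def by auto
  then show ?thesis unfolding bounded_in_def using e by blast
qed

lemma EJ_unbounded:
  assumes unc: "uncountable (UNIV :: 'a set)"
  shows "unbounded_ballean (UNIV :: 'a set) EJ"
  unfolding unbounded_ballean_def
  using D2_unbounded[OF unc] bounded_mono[OF order_trans[OF EJ_D1[OF unc] D1_D2]] by blast

lemma EJ_extremely_normal:
  assumes unc: "uncountable (UNIV :: 'a set)"
  shows "extremely_normal (UNIV :: 'a set) EJ"
  unfolding extremely_normal_def
proof (intro conjI allI impI)
  show "unbounded_ballean (UNIV :: 'a set) EJ" by (rule EJ_unbounded[OF unc])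
next
  fix A :: "'a set" assume "A \<subseteq> UNIV \<and> \<not> bounded_in UNIV EJ A"
  then have "A \<notin> small_sets" using small_bounded_EJ[OF unc] by blast
  then obtain f where f: "inj_on f (- A)" "f ` (- A) \<subseteq> A" using not_small_inj by blast
  have "f ` (- A) \<inter> (- A) = {}" using f(2) by blast
  then obtain h where h: "bij h" "\<forall>x\<in>- A. h (f x) = x" using swap_exists[OF f(1)] by blast
  have e: "E_perm {id, h} \<in> perm_coarse" by (rule E_perm_in) (use h in auto)
  then have e': "E_perm {id, h} \<in> EJ" using join_sup2 by blast
  have "UNIV \<subseteq> E_perm {id, h} `` A"
  proof
    fix z :: 'a
    show "z \<in> E_perm {id, h} `` A"
    proof (cases "z \<in> A")
      case True
      moreover have "z = id z" by simp
      ultimately show ?thesis unfolding E_perm_def by blast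
    next
      case False
      then have "f z \<in> A" "z = h (f z)" using f(2) h(2) by auto
      then show ?thesis unfolding E_perm_def by blast
    qed
  qed
  then have "UNIV = E_perm {id, h} `` A" by blast
  then show "large_in UNIV EJ A" unfolding large_in_def using e' by blast
qed


lemma exists_psi:
  assumes unc: "uncountable (UNIV :: 'a set)"
  shows "\<exists>\<psi> :: 'a \<times> nat \<Rightarrow> 'a. bij \<psi>"
proof -
  have inf: "\<not> finite (UNIV :: 'a set)" using unc_infinite[OF unc] by simp
  have "|UNIV :: nat set| \<le>o |UNIV :: 'a set|" using inf infinite_iff_card_of_nat by auto
  then have "|(UNIV :: 'a set) \<times> (UNIV :: nat set)| =o |UNIV :: 'a set|"
    using card_of_Times_infinite[OF inf, of "UNIV :: nat set"] by auto
  then obtain \<psi> :: "'a \<times> nat \<Rightarrow> 'a" where "bij_betw \<psi> ((UNIV :: 'a set) \<times> (UNIV :: nat set)) UNIV"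
    using card_of_ordIso[of "(UNIV :: 'a set) \<times> (UNIV :: nat set)" "UNIV :: 'a set"] by auto
  then show ?thesis by auto
qed

lemma not_maximal_EJ:
  assumes unc: "uncountable (UNIV :: 'a set)"
  shows "\<not> maximal_ballean (UNIV :: 'a set) EJ"
proof -
  obtain \<psi> :: "'a \<times> nat \<Rightarrow> 'a" where psi: "bij \<psi>" using exists_psi[OF unc] by blast
  have inj: "\<psi> p = \<psi> q \<longleftrightarrow> p = q" for p q using psi by (simp add: bij_def inj_eq)
  have surj: "\<exists>a m. x = \<psi> (a, m)" for x
  proof -
    obtain p where "x = \<psi> p" using psi by (metis bij_def surjD)
    then show ?thesis by (cases p) auto
  qed
  define w where "w = {(\<psi> (a, m), \<psi> (a, n)) | a m n. True}"
  have fib: "w `` {\<psi> (a, m)} = \<psi> ` ({a} \<times> UNIV)" for a m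
  proof
    show "w `` {\<psi> (a, m)} \<subseteq> \<psi> ` ({a} \<times> UNIV)"
    proof
      fix y assume "y \<in> w `` {\<psi> (a, m)}"
      then have "(\<psi> (a, m), y) \<in> w" by simp
      then obtain a' m' n where "\<psi> (a, m) = \<psi> (a', m')" "y = \<psi> (a', n)" unfolding w_def by blast
      then have "a' = a" "y = \<psi> (a, n)" using inj by auto
      then show "y \<in> \<psi> ` ({a} \<times> UNIV)" by auto
    qed
  next
    show "\<psi> ` ({a} \<times> UNIV) \<subseteq> w `` {\<psi> (a, m)}" unfolding w_def by blast
  qed
  have wsym: "w\<inverse> = w" unfolding w_def by blast
  have fibc: "countable (w `` {x})" for x
  proof -
    obtain a m where "x = \<psi> (a, m)" using surj by blast
    then show ?thesis using fib by simp
  qed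
  have fibi: "infinite (w `` {x})" for x
  proof -
    obtain a m where x: "x = \<psi> (a, m)" using surj by blast
    have "inj_on \<psi> ({a} \<times> UNIV)" using psi unfolding bij_def by (meson inj_on_subset subset_UNIV)
    moreover have "infinite ({a} \<times> (UNIV :: nat set))" by (simp add: finite_cartesian_product_iff)
    ultimately have "infinite (\<psi> ` ({a} \<times> UNIV))" using finite_imageD by blast
    then show ?thesis using x fib by simp
  qed
  have went: "entourage UNIV w"
  proof -
    have "Id_on UNIV \<subseteq> w"
    proof
      fix p assume "p \<in> Id_on (UNIV :: 'a set)"
      then obtain z where z: "p = (z, z)" by (auto simp: Id_on_def)
      obtain a m where "z = \<psi> (a, m)" using surj by blast
      then show "p \<in> w" unfolding z w_def by blast
    qed
    then show ?thesis unfolding entourage_def by simp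
  qed
  have wD2: "w \<in> Dstr P2"
  proof -
    have "P2 w" unfolding P2_def using fibc wsym by simp
    moreover have "({} :: 'a set) \<in> small_sets" using countable_small[OF unc] by simp
    moreover have "w \<subseteq> {} \<times> {} \<union> w" by simp
    ultimately show ?thesis unfolding Dstr_def using went by blast
  qed
  have wD1: "w \<notin> Dstr P1"
  proof
    assume "w \<in> Dstr P1"
    then obtain S g where S: "S \<in> small_sets" "P1 g" "w \<subseteq> S \<times> S \<union> g" unfolding Dstr_def by blast
    have "S \<noteq> UNIV" using S(1) UNIV_not_small by metis
    then obtain x where x: "x \<notin> S" by blast
    have "w `` {x} \<subseteq> g `` {x}" using S(3) x by blast
    moreover have "finite (g `` {x})" by (rule P1_finite[OF S(2)])
    ultimately have "finite (w `` {x})" by (rule finite_subset)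
    then show False using fibi by blast
  qed
  have sub: "(EJ :: ('a \<times> 'a) set set) \<subseteq> Dstr P2" using EJ_D1[OF unc] D1_D2 by (rule order_trans)
  have "w \<notin> EJ" using wD1 EJ_D1[OF unc] by blast
  then have "(EJ :: ('a \<times> 'a) set set) \<subset> Dstr P2" using sub wD2 by blast
  then show ?thesis unfolding maximal_ballean_def
    using D2_coarse[OF unc] D2_unbounded[OF unc] by blast
qed

lemma perm_strict:
  assumes unc: "uncountable (UNIV :: 'a set)"
  shows "(perm_coarse :: ('a \<times> 'a) set set) \<subset> EJ"
proof -
  have sub: "(perm_coarse :: ('a \<times> 'a) set set) \<subseteq> EJ" by (rule join_sup2)
  obtain a :: "nat \<Rightarrow> 'a" where a: "inj a"
    using infinite_countable_subset[OF unc_infinite[OF unc]] by blast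
  have inf: "infinite (range a)" using a by (simp add: range_inj_infinite)
  have B: "range a \<in> small_sets" using countable_small[OF unc] by simp
  have "entourage UNIV (E_bor UNIV (range a))" unfolding entourage_def E_bor_def by auto
  then have "E_bor UNIV (range a) \<in> discrete_coarse UNIV small_sets"
    unfolding discrete_coarse_def using B by blast
  then have e: "E_bor UNIV (range a) \<in> EJ" using join_sup1 by blast
  have nperm: "E_bor UNIV (range a) \<notin> perm_coarse"
  proof
    assume "E_bor UNIV (range a) \<in> perm_coarse"
    then have fin: "finite (E_bor UNIV (range a) `` {a 0})" by (rule perm_fiber_finite)
    have "range a \<subseteq> E_bor UNIV (range a) `` {a 0}" unfolding E_bor_def by auto
    then have "finite (range a)" using fin by (rule finite_subset)
    then show False using inf by blast
  qed
  show ?thesis using sub e nperm by blast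
qed

theorem mainTheorem9:
  assumes "uncountable (UNIV :: 'a set)"
  shows "(\<forall>Y :: 'a set. bounded_in UNIV perm_coarse Y \<longleftrightarrow> finite Y)
    \<and> ultranormal (UNIV :: 'a set) perm_coarse
    \<and> \<not> extremely_normal (UNIV :: 'a set) perm_coarse
    \<and> perm_coarse \<subset> coarse_join UNIV (discrete_coarse UNIV small_sets) (perm_coarse :: ('a \<times> 'a) set set)
    \<and> extremely_normal (UNIV :: 'a set) (coarse_join UNIV (discrete_coarse UNIV small_sets) perm_coarse)
    \<and> \<not> maximal_ballean (UNIV :: 'a set) (coarse_join UNIV (discrete_coarse UNIV small_sets) perm_coarse)"
  using bounded_perm ultranormal_perm[OF assms] not_extremely_normal_perm[OF assms]
    perm_strict[OF assms] EJ_extremely_normal[OF assms] not_maximal_EJ[OF assms]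
  by blast


end
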